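(* For every real $\gamma<1$ there exists an infinite binary sequence $\omega$ and an integer $N$ such that every substring $\omega_i\omega_{i+1}\ldots\omega_{i+n-1}$ of $\omega$ of length $n\ge N$ satisfies $K(\omega_i\ldots\omega_{i+n-1})\ge \gamma n$.
   Context: $K$ denotes prefix Kolmogorov complexity. *)

theory Defs
  imports Main "HOL-Library.Extended_Real"
begin

datatype recf =
    Z
  | S
  | Id nat
  | Cn recf "recf list"
  | Pr recf recf
  | Mn recf

inductive rec_eval :: "recf \<Rightarrow> nat list \<Rightarrow> nat \<Rightarrow> bool" where
  ev_Z:  "rec_eval Z xs 0"
| ev_S:  "rec_eval S (x # xs) (Suc x)"
| ev_Id: "i < length xs \<Longrightarrow> rec_eval (Id i) xs (xs ! i)"
| ev_Cn: "list_all2 (\<lambda>g y. rec_eval g xs y) gs ys \<Longrightarrow> rec_eval f ys z \<Longrightarrow>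
          rec_eval (Cn f gs) xs z"
| ev_Pr0: "rec_eval f xs y \<Longrightarrow> rec_eval (Pr f g) (0 # xs) y"
| ev_PrS: "rec_eval (Pr f g) (n # xs) y \<Longrightarrow> rec_eval g (n # y # xs) z \<Longrightarrow>
           rec_eval (Pr f g) (Suc n # xs) z"
| ev_Mn: "rec_eval f (n # xs) 0 \<Longrightarrow> (\<forall>m<n. \<exists>y. rec_eval f (m # xs) (Suc y)) \<Longrightarrow>
          rec_eval (Mn f) xs n"
monos list_all2_mono

definition partial_recursive :: "(nat \<Rightarrow> nat option) \<Rightarrow> bool" where
  "partial_recursive \<phi> \<longleftrightarrow> (\<exists>f. \<forall>x y. rec_eval f [x] y \<longleftrightarrow> \<phi> x = Some y)"

text \<open>Standard bijection between binary strings and naturals.\<close>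
fun bl2n :: "bool list \<Rightarrow> nat" where
  "bl2n [] = 0"
| "bl2n (b # bs) = (if b then 2 else 1) + 2 * bl2n bs"

type_synonym machine = "bool list \<Rightarrow> bool list option"

definition computable_machine :: "machine \<Rightarrow> bool" where
  "computable_machine M \<longleftrightarrow>
     (\<exists>\<phi>. partial_recursive \<phi> \<and> (\<forall>p. \<phi> (bl2n p) = map_option bl2n (M p)))"

definition prefix_free_machine :: "machine \<Rightarrow> bool" where
  "prefix_free_machine M \<longleftrightarrow> computable_machine M \<and>
     (\<forall>p r. M p \<noteq> None \<longrightarrow> M (p @ r) \<noteq> None \<longrightarrow> r = [])"

definition KM :: "machine \<Rightarrow> bool list \<Rightarrow> enat" where
  "KM M x = (if \<exists>p. M p = Some x
             then enat (LEAST n. \<exists>p. M p = Some x \<and> length p = n) else \<infinity>)"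

text \<open>Additively optimal (universal) prefix-free machines; prefix complexity K is KM U
  for such a U (well defined up to an additive constant).\<close>
definition optimal_prefix_machine :: "machine \<Rightarrow> bool" where
  "optimal_prefix_machine U \<longleftrightarrow> prefix_free_machine U \<and>
     (\<forall>M. prefix_free_machine M \<longrightarrow> (\<exists>c::nat. \<forall>x. KM U x \<le> KM M x + enat c))"

end

theory Submission
  imports Defs Complex_Main
begin


definition good :: "bool list set \<Rightarrow> bool list \<Rightarrow> bool" where
 "good P u \<longleftrightarrow> (\<forall>i m. i + m \<le> length u \<longrightarrow> take m (drop i u) \<notin> P)"

definition G :: "bool list set \<Rightarrow> nat \<Rightarrow> bool list set" where
 "G P n = {u. length u = n \<and> good P u}"

lemma finite_len: "finite {u::bool list. length u = n}"
  using finite_lists_length_eq[of "UNIV::bool set" n] by simp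

lemma card_len: "card {u::bool list. length u = n} = 2^n"
  using card_lists_length_eq[of "UNIV::bool set" n] by simp

lemma finite_G: "finite (G P n)"
  by (rule finite_subset[OF _ finite_len[of n]]) (auto simp: G_def)

lemma good_take: "good P u \<Longrightarrow> good P (take j u)"
  unfolding good_def
proof (intro allI impI)
  fix i m assume g: "\<forall>i m. i + m \<le> length u \<longrightarrow> take m (drop i u) \<notin> P"
    and h: "i+m \<le> length (take j u)"
  then have "take m (drop i (take j u)) = take m (drop i u)" by (simp add: drop_take min_def split: if_splits)
  with g h show "take m (drop i (take j u)) \<notin> P" by auto
qed

lemma card_ext: "card ((\<lambda>(u,b). u@[b]) ` (G P n \<times> (UNIV::bool set))) = 2 * card (G P n)"
proof -
  have "inj_on (\<lambda>(u,b). u@[b]) (G P n \<times> (UNIV::bool set))"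
    by (auto simp: inj_on_def)
  then show ?thesis by (simp add: card_image card_cartesian_product)
qed

lemma ext_sub:
  assumes "[] \<notin> P"
  shows "(\<lambda>(u,b). u@[b]) ` (G P n \<times> (UNIV::bool set)) \<subseteq> G P (Suc n) \<union>
     (\<Union>k\<in>{1..Suc n}. (\<lambda>(v,x). v@x) ` (G P (Suc n - k) \<times> {x\<in>P. length x = k}))"
proof
  fix w assume "w \<in> (\<lambda>(u,b). u@[b]) ` (G P n \<times> (UNIV::bool set))"
  then obtain u b where w: "w = u@[b]" and u: "length u = n" "good P u" by (auto simp: G_def)
  show "w \<in> G P (Suc n) \<union>
     (\<Union>k\<in>{1..Suc n}. (\<lambda>(v,x). v@x) ` (G P (Suc n - k) \<times> {x\<in>P. length x = k}))"
  proof (cases "good P w")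
    case True then show ?thesis using u w by (simp add: G_def)
  next
    case False
    then obtain i m where im: "i + m \<le> Suc n" "take m (drop i w) \<in> P"
      using u w unfolding good_def by auto
    show ?thesis
    proof (cases "i + m \<le> n")
      case True
      then have "take m (drop i w) = take m (drop i u)" using u w by simp
      then show ?thesis using u(2) True im u(1) unfolding good_def by auto
    next
      case False
      then have e: "i + m = Suc n" using im by simp
      have x: "take m (drop i w) = drop i w" using e u w by simp
      have m1: "m \<ge> 1" using im x e assms by (cases m) auto
      have v: "take i w = take i u" using e m1 w u by simp
      have "good P (take i u)" using good_take[OF u(2)] .
      moreover have "length (take i u) = Suc n - m" using e m1 u by simp
      moreover have "w = take i w @ drop i w" by simp
      ultimately have "w \<in> (\<lambda>(v,x). v@x) ` (G P (Suc n - m) \<times> {x\<in>P. length x = m})"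
        using v x im e w u unfolding G_def
        by (auto intro!: image_eqI[where x="(take i u, drop i w)"])
      then show ?thesis using m1 e by auto
    qed
  qed
qed

lemma finite_Pk: "finite {x\<in>(P::bool list set). length x = k}"
  by (rule finite_subset[OF _ finite_len[of k]]) auto

lemma card_bound:
  assumes "[] \<notin> P"
  shows "2 * card (G P n) \<le> card (G P (Suc n)) +
    (\<Sum>k\<in>{1..Suc n}. card (G P (Suc n - k)) * card {x\<in>P. length x = k})"
proof -
  let ?B = "\<Union>k\<in>{1..Suc n}. (\<lambda>(v,x). v@x) ` (G P (Suc n - k) \<times> {x\<in>P. length x = k})"
  have fB: "finite ?B" by (intro finite_UN_I finite_imageI finite_cartesian_product finite_G finite_Pk) simp
  have "2 * card (G P n) = card ((\<lambda>(u,b). u@[b]) ` (G P n \<times> (UNIV::bool set)))"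
    by (simp add: card_ext)
  also have "\<dots> \<le> card (G P (Suc n) \<union> ?B)"
    by (rule card_mono[OF _ ext_sub[OF assms]]) (rule finite_UnI[OF finite_G fB])
  also have "\<dots> \<le> card (G P (Suc n)) + card ?B" by (rule card_Un_le)
  also have "card ?B \<le> (\<Sum>k\<in>{1..Suc n}. card ((\<lambda>(v,x). v@x) ` (G P (Suc n - k) \<times> {x\<in>P. length x = k})))"
    by (rule card_UN_le[OF finite_atLeastAtMost])
  also have "\<dots> \<le> (\<Sum>k\<in>{1..Suc n}. card (G P (Suc n - k)) * card {x\<in>P. length x = k})"
    by (rule sum_mono) (simp add: card_image_le[OF finite_cartesian_product[OF finite_G finite_Pk], THEN order_trans] card_cartesian_product)
  finally show ?thesis by simp
qed

lemma dec:
  fixes a :: "nat \<Rightarrow> real"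
  assumes "\<forall>j<n. a j \<le> \<alpha> * a (Suc j)" "\<alpha> > 0"
  shows "d \<le> n \<Longrightarrow> a (n - d) \<le> \<alpha>^d * a n"
proof (induction d)
  case 0 then show ?case by simp
next
  case (Suc d)
  have "a (n - Suc d) \<le> \<alpha> * a (Suc (n - Suc d))" using assms(1) Suc.prems by simp
  also have "Suc (n - Suc d) = n - d" using Suc.prems by simp
  also have "\<alpha> * a (n - d) \<le> \<alpha> * (\<alpha>^d * a n)"
    using Suc assms(2) by (intro mult_left_mono) auto
  finally show ?case by simp
qed

lemma all_pos:
  assumes P0: "[] \<notin> P" and apos: "\<alpha> > 0"
    and fk: "\<forall>k. real (card {x\<in>P. length x = k}) \<le> f k"
    and S: "\<forall>n. (\<Sum>k\<in>{1..Suc n}. f k * \<alpha>^(k-1)) \<le> 2 - 1/\<alpha>"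
  shows "G P n \<noteq> {}"
proof -
  define a where "a = (\<lambda>n. real (card (G P n)))"
  have Q: "\<forall>j<n. a j \<le> \<alpha> * a (Suc j)" for n
  proof (induction n)
    case 0 then show ?case by simp
  next
    case (Suc n)
    have cb: "2 * a n \<le> a (Suc n) + (\<Sum>k\<in>{1..Suc n}. a (Suc n - k) * real (card {x\<in>P. length x = k}))"
    proof -
      have "real (2 * card (G P n)) \<le> real (card (G P (Suc n)) +
        (\<Sum>k\<in>{1..Suc n}. card (G P (Suc n - k)) * card {x\<in>P. length x = k}))"
        using card_bound[OF P0, of n] by (rule of_nat_mono)
      then show ?thesis unfolding a_def by (simp add: of_nat_sum)
    qed
    have "(\<Sum>k\<in>{1..Suc n}. a (Suc n - k) * real (card {x\<in>P. length x = k}))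
        \<le> (\<Sum>k\<in>{1..Suc n}. (\<alpha>^(k-1) * a n) * f k)"
    proof (rule sum_mono)
      fix k assume k: "k \<in> {1..Suc n}"
      have "k - 1 \<le> n" using k by auto
      then have "a (n - (k-1)) \<le> \<alpha>^(k-1) * a n" by (rule dec[OF Suc.IH apos])
      moreover have "Suc n - k = n - (k-1)" using k by (simp add: atLeastAtMost_iff)
      ultimately have h1: "a (Suc n - k) \<le> \<alpha>^(k-1) * a n" by metis
      have h2: "0 \<le> \<alpha>^(k-1) * a n" using apos by (simp add: a_def)
      show "a (Suc n - k) * real (card {x\<in>P. length x = k}) \<le> (\<alpha>^(k-1) * a n) * f k"
        by (rule mult_mono[OF h1 spec[OF fk] h2]) simp
    qed
    also have "\<dots> = a n * (\<Sum>k\<in>{1..Suc n}. f k * \<alpha>^(k-1))"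
      unfolding sum_distrib_left by (rule sum.cong) (simp_all add: mult_ac)
    also have "\<dots> \<le> a n * (2 - 1/\<alpha>)"
      using S by (intro mult_left_mono) (auto simp: a_def)
    finally have "2 * a n \<le> a (Suc n) + a n * (2 - 1/\<alpha>)" using cb by linarith
    then have "a n * (1/\<alpha>) \<le> a (Suc n)" by (simp add: right_diff_distrib)
    then have "a n / \<alpha> \<le> a (Suc n)" by simp
    then have "a n \<le> \<alpha> * a (Suc n)" using apos by (simp add: field_simps)
    then show ?case using Suc.IH less_Suc_eq by auto
  qed
  have "G P 0 = {[]}" using P0 by (auto simp: G_def good_def)
  then have "a 0 = 1" by (simp add: a_def)
  then have "1 \<le> \<alpha>^n * a n" using dec[OF Q apos, of n n] by simp
  then have "a n \<noteq> 0" by auto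
  then show ?thesis by (auto simp: a_def)
qed



definition extd :: "bool list set \<Rightarrow> bool list \<Rightarrow> bool" where
  "extd P u \<longleftrightarrow> (\<forall>m. \<exists>v. length v = m \<and> good P (u@v))"

lemma extd_step: assumes "extd P u" shows "extd P (u@[True]) \<or> extd P (u@[False])"
proof (rule ccontr)
  assume "\<not> ?thesis"
  then obtain m1 m2 where m1: "\<forall>v. length v = m1 \<longrightarrow> \<not> good P (u@[True]@v)"
     and m2: "\<forall>v. length v = m2 \<longrightarrow> \<not> good P (u@[False]@v)"
    unfolding extd_def by auto
  obtain v where v: "length v = Suc (max m1 m2)" "good P (u@v)" using assms unfolding extd_def by blast
  then obtain b v' where bv: "v = b # v'" by (cases v) auto
  have t: "take (length u + Suc m) (u@v) = u@[b]@take m v'" for m using bv by simp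
  have g: "good P (u@[b]@take m v')" for m using good_take[OF v(2), of "length u + Suc m"] t by simp
  have l: "length (take m v') = m" if "m \<le> max m1 m2" for m using v bv that by simp
  show False
  proof (cases b)
    case True then show ?thesis using m1 g[of m1] l[of m1] by simp
  next
    case False then show ?thesis using m2 g[of m2] l[of m2] by simp
  qed
qed

fun pref :: "bool list set \<Rightarrow> nat \<Rightarrow> bool list" where
  "pref P 0 = []"
| "pref P (Suc n) = (if extd P (pref P n @ [True]) then pref P n @ [True] else pref P n @ [False])"

lemma pref_ext: "extd P [] \<Longrightarrow> extd P (pref P n) \<and> length (pref P n) = n"
proof (induction n)
  case 0 then show ?case by simp
next
  case (Suc n) then show ?case using extd_step[of P "pref P n"] by auto
qed

lemma pref_len: "length (pref P n) = n"
  by (induction n) auto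

lemma pref_take: "m \<le> n \<Longrightarrow> take m (pref P n) = pref P m"
proof (induction n)
  case 0 then show ?case by simp
next
  case (Suc n)
  show ?case
  proof (cases "m \<le> n")
    case True
    have "take m (pref P (Suc n)) = take m (pref P n)" using True pref_len[of P n] by simp
    then show ?thesis using Suc True by simp
  next
    case False then have "m = Suc n" using Suc by simp
    then show ?thesis using pref_len[of P "Suc n"] by simp
  qed
qed

lemma pref_nth: "j < n \<Longrightarrow> pref P (Suc j) ! j = pref P n ! j"
proof -
  assume j: "j < n"
  have "pref P (Suc j) = take (Suc j) (pref P n)" using pref_take[of "Suc j" n P] j by simp
  then show ?thesis by simp
qed

lemma extd_good: "extd P u \<Longrightarrow> good P u"
  unfolding extd_def by (metis append_Nil2 length_0_conv)

lemma avoid_seq: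
  assumes "\<forall>n. G P n \<noteq> {}"
  shows "\<exists>\<omega>::nat \<Rightarrow> bool. \<forall>i n. map (\<lambda>k. \<omega> (i + k)) [0..<n] \<notin> P"
proof -
  have e0: "extd P []" unfolding extd_def using assms by (auto simp: G_def)
  define \<omega> where "\<omega> k = pref P (Suc k) ! k" for k
  have "map (\<lambda>k. \<omega> (i + k)) [0..<n] \<notin> P" for i n
  proof -
    have eq: "map (\<lambda>k. \<omega> (i + k)) [0..<n] = take n (drop i (pref P (i+n)))"
      by (rule nth_equalityI) (auto simp: pref_len \<omega>_def pref_nth simp del: pref.simps)
    have "good P (pref P (i+n))" using pref_ext[OF e0] extd_good by blast
    then have "take n (drop i (pref P (i+n))) \<notin> P" unfolding good_def pref_len by blast
    then show ?thesis unfolding eq .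
  qed
  then show ?thesis by blast
qed



lemma count_short: "real (card {p::bool list. length p < M}) + 1 \<le> 2^M"
proof (induction M)
  case 0 then show ?case by simp
next
  case (Suc M)
  have "{p::bool list. length p < Suc M} = {p. length p < M} \<union> {p. length p = M}" by auto
  then have "card {p::bool list. length p < Suc M} \<le> card {p::bool list. length p < M} + card {p::bool list. length p = M}"
    by (simp add: card_Un_le)
  then have "real (card {p::bool list. length p < Suc M}) \<le> real (card {p::bool list. length p < M}) + 2^M"
    using card_len[of M] by (metis of_nat_add of_nat_mono of_nat_numeral of_nat_power)
  then show ?case using Suc by simp
qed

lemma finite_short: "finite {p::bool list. length p < M}"
proof -
  have "{p::bool list. length p < M} = (\<Union>j<M. {p. length p = j})" by auto
  then show ?thesis using finite_len by simp
qed

lemma count_bad: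
  fixes c :: real assumes c: "c \<ge> 0"
  shows "real (card {x. length x = k \<and> ereal_of_enat (KM U x) < ereal (c * real k)}) \<le> 2 powr (c*k+1)"
proof -
  define M where "M = nat \<lceil>c * real k\<rceil>"
  have sub: "{x. length x = k \<and> ereal_of_enat (KM U x) < ereal (c * real k)} \<subseteq> (\<lambda>p. the (U p)) ` {p. length p < M}"
  proof
    fix x assume x: "x \<in> {x. length x = k \<and> ereal_of_enat (KM U x) < ereal (c * real k)}"
    have ex: "\<exists>p. U p = Some x"
    proof (rule ccontr)
      assume "\<not> ?thesis"
      then have "KM U x = \<infinity>" by (simp add: KM_def)
      then show False using x by simp
    qed
    define L where "L = (LEAST n. \<exists>p. U p = Some x \<and> length p = n)"
    have KL: "KM U x = enat L" using ex by (simp add: KM_def L_def)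
    obtain p where p: "U p = Some x" "length p = L"
      using LeastI_ex[of "\<lambda>n. \<exists>p. U p = Some x \<and> length p = n"] ex unfolding L_def by blast
    have "real L < c * real k" using x KL by simp
    then have "int L < \<lceil>c * real k\<rceil>" by (simp add: less_ceiling_iff)
    then have "L < M" unfolding M_def by linarith
    then show "x \<in> (\<lambda>p. the (U p)) ` {p. length p < M}" using p by (auto intro!: image_eqI[where x=p])
  qed
  have "card {x. length x = k \<and> ereal_of_enat (KM U x) < ereal (c * real k)} \<le> card ((\<lambda>p. the (U p)) ` {p::bool list. length p < M})"
    by (rule card_mono[OF finite_imageI[OF finite_short] sub])
  also have "\<dots> \<le> card {p::bool list. length p < M}" by (rule card_image_le[OF finite_short])
  finally have "real (card {x. length x = k \<and> ereal_of_enat (KM U x) < ereal (c * real k)}) \<le> 2^M"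
    using count_short[of M] by (meson of_nat_le_iff order_trans add_increasing2 zero_le_one le_add_same_cancel1 linorder_not_le
       less_le_trans not_one_le_zero)
  also have "(2::real)^M = 2 powr (real M)" by (simp add: powr_realpow)
  also have "\<dots> \<le> 2 powr (c*k+1)"
  proof (rule powr_mono)
    have "0 \<le> c * real k" using c by simp
    then have "real M = of_int \<lceil>c * real k\<rceil>" unfolding M_def by simp
    also have "\<dots> \<le> c * real k + 1" using ceiling_correct[of "c * real k"] by linarith
    finally show "real M \<le> c * real k + 1" .
  qed simp
  finally show ?thesis .
qed

lemma geom:
  fixes \<rho> :: real
  assumes "N \<ge> 1"
  shows "(1 - \<rho>) * (\<Sum>k\<in>{1..m}. if N \<le> k then \<rho>^k else 0) = (if N \<le> m then \<rho>^N - \<rho>^(Suc m) else 0)"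
proof (induction m)
  case 0 then show ?case using assms by simp
next
  case (Suc m)
  have "(\<Sum>k\<in>{1..Suc m}. if N \<le> k then \<rho>^k else 0) = (\<Sum>k\<in>{1..m}. if N \<le> k then \<rho>^k else 0) + (if N \<le> Suc m then \<rho>^(Suc m) else 0)"
    by (simp add: sum.cl_ivl_Suc)
  then have "(1 - \<rho>) * (\<Sum>k\<in>{1..Suc m}. if N \<le> k then \<rho>^k else 0) =
      (if N \<le> m then \<rho>^N - \<rho>^(Suc m) else 0) + (1 - \<rho>) * (if N \<le> Suc m then \<rho>^(Suc m) else 0)"
    using Suc by (simp add: distrib_left)
  also have "\<dots> = (if N \<le> Suc m then \<rho>^N - \<rho>^(Suc (Suc m)) else 0)"
    by (cases "N \<le> m"; cases "N = Suc m") (auto simp: algebra_simps)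
  finally show ?case .
qed



lemma key_term:
  fixes c :: real and k :: nat
  assumes "k \<ge> 1"
  shows "2 powr (c*k+1) * (2 powr (-(1+c)/2))^(k-1) = (2 / 2 powr (-(1+c)/2)) * (2 powr ((c-1)/2))^k"
proof -
  define \<alpha> where "\<alpha> = (2::real) powr (-(1+c)/2)"
  have a0: "\<alpha> > 0" by (simp add: \<alpha>_def)
  have "\<alpha>^(k-1) = \<alpha>^k / \<alpha>" using assms a0
    by (metis One_nat_def Suc_diff_le diff_Suc_1 nonzero_mult_div_cancel_left power_Suc order.strict_iff_not less_numeral_extra(3))
  moreover have "\<alpha>^k = 2 powr (real k * (-(1+c)/2))" unfolding \<alpha>_def by (simp add: powr_power)
  moreover have "(2 powr ((c-1)/2))^k = (2::real) powr (real k * ((c-1)/2))" by (simp add: powr_power)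
  moreover have "2 powr (c*k+1) * 2 powr (real k * (-(1+c)/2)) = 2 * (2::real) powr (real k * ((c-1)/2))"
  proof -
    have "2 powr (c*k+1) * 2 powr (real k * (-(1+c)/2)) = (2::real) powr (c*k+1 + real k * (-(1+c)/2))"
      by (simp add: powr_add)
    also have "c*k+1 + real k * (-(1+c)/2) = 1 + real k * ((c-1)/2)" by (simp add: field_simps)
    also have "(2::real) powr (1 + real k * ((c-1)/2)) = 2 * 2 powr (real k * ((c-1)/2))" by (simp add: powr_add)
    finally show ?thesis .
  qed
  ultimately show ?thesis unfolding \<alpha>_def[symmetric] by (simp add: field_simps)
qed

theorem mainTheorem2:
  fixes U :: machine
  assumes "optimal_prefix_machine U"
  shows "\<forall>\<gamma>::real. \<gamma> < 1 \<longrightarrow>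
           (\<exists>(\<omega>::nat \<Rightarrow> bool) (N::nat). \<forall>i n. N \<le> n \<longrightarrow>
              ereal (\<gamma> * real n) \<le> ereal_of_enat (KM U (map (\<lambda>k. \<omega> (i + k)) [0..<n])))"
proof (intro allI impI)
  fix \<gamma> :: real assume g1: "\<gamma> < 1"
  define c where "c = max \<gamma> 0"
  have c0: "c \<ge> 0" and c1: "c < 1" and gc: "\<gamma> \<le> c" using g1 by (auto simp: c_def)
  define \<rho> where "\<rho> = (2::real) powr ((c-1)/2)"
  define \<alpha> where "\<alpha> = (2::real) powr (-(1+c)/2)"
  have r0: "\<rho> > 0" by (simp add: \<rho>_def)
  have r1: "\<rho> < 1" unfolding \<rho>_def using c1 by (simp add: powr_less_one)
  have a0: "\<alpha> > 0" by (simp add: \<alpha>_def)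
  have ah: "\<alpha> > 1/2"
  proof -
    have "(2::real) powr (-1) < 2 powr (-(1+c)/2)" using c1 by (intro powr_less_mono) auto
    then show ?thesis unfolding \<alpha>_def by (simp add: powr_minus)
  qed
  obtain n0 where n0: "\<rho>^n0 < (1-\<rho>) * (\<alpha> - 1/2)"
    using real_arch_pow_inv[of "(1-\<rho>) * (\<alpha> - 1/2)" \<rho>] r1 ah by auto
  define N where "N = Suc n0"
  have N1: "N \<ge> 1" by (simp add: N_def)
  have rN: "\<rho>^N \<le> (1-\<rho>) * (\<alpha> - 1/2)"
  proof -
    have "\<rho>^N \<le> \<rho>^n0" unfolding N_def using r0 r1 by (intro power_decreasing) auto
    then show ?thesis using n0 by simp
  qed
  define P where "P = {x. N \<le> length x \<and> ereal_of_enat (KM U x) < ereal (c * real (length x))}"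
  define f where "f k = (if N \<le> k then 2 powr (c*k+1) else (0::real))" for k :: nat
  have P0: "[] \<notin> P" using N1 by (simp add: P_def)
  have fk: "\<forall>k. real (card {x\<in>P. length x = k}) \<le> f k"
  proof
    fix k
    show "real (card {x\<in>P. length x = k}) \<le> f k"
    proof (cases "N \<le> k")
      case True
      then have "{x\<in>P. length x = k} = {x. length x = k \<and> ereal_of_enat (KM U x) < ereal (c * real k)}"
        unfolding P_def by auto
      then show ?thesis using count_bad[OF c0, of k U] True by (simp add: f_def)
    next
      case False
      then have "{x\<in>P. length x = k} = {}" unfolding P_def by auto
      then have "card {x\<in>P. length x = k} = 0" by (simp only: card.empty)
      then show ?thesis using False by (simp add: f_def)
    qed
  qed
  have S: "\<forall>n. (\<Sum>k\<in>{1..Suc n}. f k * \<alpha>^(k-1)) \<le> 2 - 1/\<alpha>"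
  proof
    fix n
    have "(\<Sum>k\<in>{1..Suc n}. f k * \<alpha>^(k-1)) = (\<Sum>k\<in>{1..Suc n}. (2/\<alpha>) * (if N \<le> k then \<rho>^k else 0))"
    proof (rule sum.cong)
      fix k assume "k \<in> {1..Suc n}"
      then have "k \<ge> 1" by simp
      then show "f k * \<alpha>^(k-1) = (2/\<alpha>) * (if N \<le> k then \<rho>^k else 0)"
        using key_term[of k c] unfolding f_def \<alpha>_def \<rho>_def by simp
    qed simp
    also have "\<dots> = (2/\<alpha>) * (\<Sum>k\<in>{1..Suc n}. if N \<le> k then \<rho>^k else 0)"
      by (rule sum_distrib_left[symmetric])
    also have "(\<Sum>k\<in>{1..Suc n}. if N \<le> k then \<rho>^k else 0) \<le> \<rho>^N / (1-\<rho>)"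
    proof -
      have "(1-\<rho>) * (\<Sum>k\<in>{1..Suc n}. if N \<le> k then \<rho>^k else 0) \<le> \<rho>^N"
        using geom[OF N1, of \<rho> "Suc n"] r0 by simp
      then show ?thesis using r1 by (simp add: field_simps mult.commute)
    qed
    then have "(2/\<alpha>) * (\<Sum>k\<in>{1..Suc n}. if N \<le> k then \<rho>^k else 0) \<le> (2/\<alpha>) * (\<rho>^N / (1-\<rho>))"
      using a0 by (intro mult_left_mono) auto
    also have "\<rho>^N / (1-\<rho>) \<le> \<alpha> - 1/2" using rN r1 by (simp add: field_simps mult.commute)
    then have "(2/\<alpha>) * (\<rho>^N / (1-\<rho>)) \<le> (2/\<alpha>) * (\<alpha> - 1/2)" using a0 by (intro mult_left_mono) auto
    also have "(2/\<alpha>) * (\<alpha> - 1/2) = 2 - 1/\<alpha>" using a0 by (simp add: field_simps)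
    finally show "(\<Sum>k\<in>{1..Suc n}. f k * \<alpha>^(k-1)) \<le> 2 - 1/\<alpha>" by simp
  qed
  have "\<forall>n. G P n \<noteq> {}" using all_pos[OF P0 a0 fk S] by blast
  then obtain \<omega> where om: "\<forall>i n. map (\<lambda>k. \<omega> (i + k)) [0..<n] \<notin> P" using avoid_seq by blast
  have "\<forall>i n. N \<le> n \<longrightarrow> ereal (\<gamma> * real n) \<le> ereal_of_enat (KM U (map (\<lambda>k. \<omega> (i + k)) [0..<n]))"
  proof (intro allI impI)
    fix i n assume Nn: "N \<le> n"
    let ?x = "map (\<lambda>k. \<omega> (i + k)) [0..<n]"
    have "\<not> ereal_of_enat (KM U ?x) < ereal (c * real n)" using om Nn unfolding P_def by auto
    then have "ereal (c * real n) \<le> ereal_of_enat (KM U ?x)" by (simp add: not_less)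
    moreover have "ereal (\<gamma> * real n) \<le> ereal (c * real n)" using gc by (simp add: mult_right_mono)
    ultimately show "ereal (\<gamma> * real n) \<le> ereal_of_enat (KM U ?x)" by (rule order_trans[rotated])
  qed
  then show "\<exists>(\<omega>::nat \<Rightarrow> bool) (N::nat). \<forall>i n. N \<le> n \<longrightarrow>
              ereal (\<gamma> * real n) \<le> ereal_of_enat (KM U (map (\<lambda>k. \<omega> (i + k)) [0..<n]))" by blast
qed


end
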